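(* Let $t, u, v$ be integers with $t \ge 2$, $u \ge 2$, $v \ge 2$, and let $\lambda, \gamma$ be rationals with $\lambda < \gamma(u-v)$. Put $d = (v-1)t - v$, \[ \tau = \frac{\lambda + \gamma(v-1)t}{(v-1)t + u - v}, \qquad L(b) = \gamma - [\gamma(u-v) - \lambda]\,\frac{b\,[d(b-1)+t]}{[(d+u)(b-1)+t]\,[db+t]} \quad (b \ge 1 \text{ integer}). \] Then: (i) if $t = v = u = 2$, then $L(b) = \tau$ for all $b \ge 1$; (ii) if $u = t$ and either $t > 2$ or $v > 2$, then $L(1) = \tau$ and $L(b) > \tau$ for all $b \ge 2$; (iii) if $u < t$, then $L(b) > \tau$ for all $b \ge 1$; (iv) if $u > t$, then $L(1) = \min_{b \ge 1} L(b) < \tau$. Consequently $L(b) \ge \min\{\tau, L(1)\}$ for all $b \ge 1$. *)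

theory Defs
  imports Complex_Main
begin

definition dpar :: "int \<Rightarrow> int \<Rightarrow> int" where
  "dpar t v = (v - 1) * t - v"

definition tau :: "int \<Rightarrow> int \<Rightarrow> int \<Rightarrow> rat \<Rightarrow> rat \<Rightarrow> rat" where
  "tau t u v lam gam = (lam + gam * of_int (v - 1) * of_int t) / of_int ((v - 1) * t + u - v)"

definition Lfun :: "int \<Rightarrow> int \<Rightarrow> int \<Rightarrow> rat \<Rightarrow> rat \<Rightarrow> int \<Rightarrow> rat" where
  "Lfun t u v lam gam b = gam - (gam * of_int (u - v) - lam) *
     (of_int (b * (dpar t v * (b - 1) + t)) /
      of_int (((dpar t v + u) * (b - 1) + t) * (dpar t v * b + t)))"

end

theory Submission
  imports Defs
begin

lemma keyeq:
  fixes d D t u b c g :: rat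
  assumes "D = d + u" "D > 0" "(D*(b-1)+t)*(d*b+t) > 0"
  shows "g - c * (b*(d*(b-1)+t) / ((D*(b-1)+t)*(d*b+t))) - (g - c / D)
     = c*t*(d*(b-1)+t-u) / (D*((D*(b-1)+t)*(d*b+t)))"
  using assms by (simp add: field_simps)

lemma keyeq2:
  fixes X Y P E t c g :: rat
  assumes "P > 0" "E > 0" "t > 0"
  shows "g - c * (X * Y / P) - (g - c * (t / (t * E))) = c * (P - E * X * Y) / (E * P)"
  using assms by (simp add: field_simps)

lemma sgn_aux:
  fixes y :: rat and x :: int
  assumes "sgn y = sgn (of_int x :: rat)"
  shows "(x \<ge> 0 \<longrightarrow> y \<ge> 0) \<and> (x > 0 \<longrightarrow> y > 0) \<and> (x = 0 \<longrightarrow> y = 0) \<and> (x < 0 \<longrightarrow> y < 0)"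
  using assms by (auto simp: sgn_if split: if_splits)

theorem lemma25:
  fixes t u v :: int and lam gam :: rat
  assumes "t \<ge> 2" "u \<ge> 2" "v \<ge> 2"
    and "lam < gam * of_int (u - v)"
  defines "\<tau> \<equiv> tau t u v lam gam"
    and "L \<equiv> Lfun t u v lam gam"
  shows "(t = 2 \<and> v = 2 \<and> u = 2 \<longrightarrow> (\<forall>b\<ge>1. L b = \<tau>))
    \<and> (u = t \<and> (t > 2 \<or> v > 2) \<longrightarrow> L 1 = \<tau> \<and> (\<forall>b\<ge>2. L b > \<tau>))
    \<and> (u < t \<longrightarrow> (\<forall>b\<ge>1. L b > \<tau>))
    \<and> (u > t \<longrightarrow> (\<forall>b\<ge>1. L 1 \<le> L b) \<and> L 1 < \<tau>)
    \<and> (\<forall>b\<ge>1. L b \<ge> min \<tau> (L 1))"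
proof -
  define d where "d = dpar t v"
  define D where "D = d + u"
  define c where "c = gam * of_int (u - v) - lam"
  have c0: "c > 0" using assms(4) c_def by simp
  have dge: "d \<ge> v - 2"
  proof -
    have "(v-1)*t \<ge> (v-1)*2" using assms by (intro mult_left_mono) auto
    then show ?thesis unfolding d_def dpar_def by simp
  qed
  have d0: "d \<ge> 0" using dge assms by simp
  have dz: "d = 0 \<longleftrightarrow> t = 2 \<and> v = 2"
  proof
    assume h: "d = 0"
    then have v2: "v = 2" using dge assms by simp
    then show "t = 2 \<and> v = 2" using h unfolding d_def dpar_def by simp
  qed (simp add: d_def dpar_def)
  have Dpos: "D > 0" using d0 assms D_def by simp
  have tauv: "\<tau> = gam - c / of_int D"
  proof -
    have e: "(v - 1) * t + u - v = D" unfolding D_def d_def dpar_def by simp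
    have "of_int D \<noteq> (0::rat)" using Dpos by simp
    then show ?thesis unfolding \<tau>_def tau_def e c_def
      by (simp add: field_simps D_def d_def dpar_def)
  qed
  have Lv: "L b = gam - c * (of_int b * (of_int d * (of_int b - 1) + of_int t) /
      ((of_int D * (of_int b - 1) + of_int t) * (of_int d * of_int b + of_int t)))" for b
    unfolding L_def Lfun_def c_def d_def D_def by simp
  have Ppos: "(of_int D * (of_int b - 1) + of_int t) * (of_int d * of_int b + of_int t) > (0::rat)"
    if "b \<ge> 1" for b
  proof -
    have "D * (b-1) \<ge> 0" "d * b \<ge> 0" using that Dpos d0 by auto
    then have "(D * (b - 1) + t) * (d * b + t) > 0" using assms by simp
    then show ?thesis by (metis of_int_0_less_iff of_int_add of_int_diff of_int_mult of_int_1)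
  qed
  have diff: "L b - \<tau> = c * of_int t * (of_int d * (of_int b - 1) + of_int t - of_int u) /
      (of_int D * ((of_int D * (of_int b - 1) + of_int t) * (of_int d * of_int b + of_int t)))"
    if "b \<ge> 1" for b
    unfolding Lv tauv
    by (rule keyeq) (use Ppos[OF that] Dpos D_def in auto)
  have sgn: "sgn (L b - \<tau>) = sgn (of_int (d * (b - 1) + t - u) :: rat)" if "b \<ge> 1" for b
  proof -
    have pos: "c * of_int t / (of_int D * ((of_int D * (of_int b - 1) + of_int t) * (of_int d * of_int b + of_int t))) > 0"
      using c0 assms Dpos Ppos[OF that] by simp
    have "L b - \<tau> = (c * of_int t / (of_int D * ((of_int D * (of_int b - 1) + of_int t) * (of_int d * of_int b + of_int t))))
       * of_int (d * (b - 1) + t - u)" unfolding diff[OF that] by simp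
    then show "sgn (L b - \<tau>) = sgn (of_int (d * (b - 1) + t - u) :: rat)"
      using pos by (metis sgn_mult sgn_pos mult_1)
  qed
  have ge: "L b \<ge> \<tau>" if "b \<ge> 1" "d * (b - 1) + t - u \<ge> 0" for b
    using sgn_aux[OF sgn[OF that(1)]] that(2) by auto
  have gt: "L b > \<tau>" if "b \<ge> 1" "d * (b - 1) + t - u > 0" for b
    using sgn_aux[OF sgn[OF that(1)]] that(2) by auto
  have eq: "L b = \<tau>" if "b \<ge> 1" "d * (b - 1) + t - u = 0" for b
    using sgn_aux[OF sgn[OF that(1)]] that(2) by auto
  have lt: "L b < \<tau>" if "b \<ge> 1" "d * (b - 1) + t - u < 0" for b
    using sgn_aux[OF sgn[OF that(1)]] that(2) by auto
  have L1min: "L 1 \<le> L b" if "b \<ge> 1" "u > t" for b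
  proof -
    have N1: "(D*(b-1)+t)*(d*b+t) - (d+t)*b*(d*(b-1)+t) \<ge> ((d+t)*(b-1)+t)*(d*b+t) - (d+t)*b*(d*(b-1)+t)"
    proof -
      have "D*(b-1) \<ge> (d+t)*(b-1)" using that D_def by (intro mult_right_mono) auto
      moreover have "d*b+t \<ge> 0" using d0 that assms by simp
      ultimately show ?thesis by (simp add: mult_right_mono)
    qed
    have N2: "((d+t)*(b-1)+t)*(d*b+t) - (d+t)*b*(d*(b-1)+t) = t*d*(b-1)"
      by (simp add: algebra_simps)
    have N3: "t*d*(b-1) \<ge> 0" using d0 assms that by simp
    have N: "(D*(b-1)+t)*(d*b+t) - (d+t)*b*(d*(b-1)+t) \<ge> 0" using N1 N2 N3 by (simp only:)
    have N': "(of_int D*(of_int b-1)+of_int t)*(of_int d*of_int b+of_int t) - (of_int d+of_int t)*of_int b*(of_int d*(of_int b-1)+of_int t) \<ge> (0::rat)"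
    proof -
      have "(0::rat) \<le> of_int ((D*(b-1)+t)*(d*b+t) - (d+t)*b*(d*(b-1)+t))"
        using N by (simp only: of_int_0_le_iff)
      then show ?thesis by simp
    qed
    have dt: "(of_int d + of_int t :: rat) > 0" using d0 assms by simp
    have "L b - L 1 = c*(((of_int D*(of_int b-1)+of_int t)*(of_int d*of_int b+of_int t)) - (of_int d+of_int t)*of_int b*(of_int d*(of_int b-1)+of_int t)) / ((of_int d+of_int t)*((of_int D*(of_int b-1)+of_int t)*(of_int d*of_int b+of_int t)))"
    proof -
      have L1: "L 1 = gam - c * (of_int t / (of_int t * (of_int d + of_int t)))"
        unfolding Lv[of 1] by (simp add: algebra_simps)
      show ?thesis unfolding L1 Lv[of b]
        by (rule keyeq2[where P="(of_int D*(of_int b-1)+of_int t)*(of_int d*of_int b+of_int t)"])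
           (use Ppos[OF that(1)] dt assms in auto)
    qed
    also have "\<dots> \<ge> 0" using c0 N' dt Ppos[OF that(1)]
      by (intro divide_nonneg_pos mult_nonneg_nonneg) (auto intro!: mult_pos_pos[OF dt Ppos[OF that(1)]])
    finally show ?thesis by simp
  qed
  show ?thesis
  proof (intro conjI impI allI)
    fix b :: int assume "t = 2 \<and> v = 2 \<and> u = 2" "b \<ge> 1"
    then show "L b = \<tau>" using eq dz by auto
  next
    assume "u = t \<and> (t > 2 \<or> v > 2)"
    then show "L 1 = \<tau>" using eq by auto
  next
    fix b :: int assume h: "u = t \<and> (t > 2 \<or> v > 2)" "b \<ge> 2"
    then have "d > 0" using dz d0 by auto
    then show "L b > \<tau>" using gt h by auto
  next
    fix b :: int assume "u < t" "b \<ge> 1"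
    moreover have "d * (b - 1) \<ge> 0" using d0 \<open>b \<ge> 1\<close> by simp
    ultimately show "L b > \<tau>" using gt[of b] by simp
  next
    fix b :: int assume "u > t" "b \<ge> 1"
    then show "L 1 \<le> L b" using L1min by auto
  next
    assume "u > t" then show "L 1 < \<tau>" using lt by auto
  next
    fix b :: int assume b: "b \<ge> 1"
    show "L b \<ge> min \<tau> (L 1)"
    proof (cases "u > t")
      case True then have "L 1 \<le> L b" using L1min b by auto
      then show ?thesis by (simp add: min.coboundedI2)
    next
      case False
      have "d * (b-1) \<ge> 0" using d0 b by simp
      then have "L b \<ge> \<tau>" using ge b False by simp
      then show ?thesis by simp
    qed
  qed
qed

end
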